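(* Let $m,n\geq 2$. If $S$ is a $\{2\}$-resolving set of the rook's graph $K_m\Box K_n$, then every quadruple of $K_m\Box K_n$ contains at least one element of $S$.
   Context: $K_m\Box K_n$ has vertices $av$ with $a\in V(K_m)$, $v\in V(K_n)$; distinct $av,bu$ are adjacent iff $a=b$ or $u=v$. A quadruple is a set $\{av,au,bv,bu\}$ with $a\neq b$ in $V(K_m)$ and $u\neq v$ in $V(K_n)$. $d$ is the shortest-path distance, $d(s,X)=\min_{x\in X}d(s,x)$, $\mathcal{D}_S(X)=(d(s_1,X),\dots,d(s_k,X))$ for $S=\{s_1,\dots,s_k\}$. $S$ is a $\{2\}$-resolving set if $\mathcal{D}_S(X)\neq\mathcal{D}_S(Y)$ for all distinct nonempty vertex sets $X,Y$ with $|X|,|Y|\leq 2$. *)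

theory Defs
  imports Main
begin

definition rook_vertices :: "nat \<Rightarrow> nat \<Rightarrow> (nat \<times> nat) set" where
  "rook_vertices m n = {0..<m} \<times> {0..<n}"

definition rook_adj :: "nat \<times> nat \<Rightarrow> nat \<times> nat \<Rightarrow> bool" where
  "rook_adj x y \<longleftrightarrow> x \<noteq> y \<and> (fst x = fst y \<or> snd x = snd y)"

definition rook_walk :: "nat \<Rightarrow> nat \<Rightarrow> (nat \<times> nat) list \<Rightarrow> bool" where
  "rook_walk m n p \<longleftrightarrow> p \<noteq> [] \<and> set p \<subseteq> rook_vertices m n \<and>
     (\<forall>i. Suc i < length p \<longrightarrow> rook_adj (p ! i) (p ! Suc i))"

definition rook_dist :: "nat \<Rightarrow> nat \<Rightarrow> nat \<times> nat \<Rightarrow> nat \<times> nat \<Rightarrow> nat" where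
  "rook_dist m n x y = (LEAST k. \<exists>p. rook_walk m n p \<and> hd p = x \<and> last p = y \<and> length p = Suc k)"

definition rook_set_dist :: "nat \<Rightarrow> nat \<Rightarrow> nat \<times> nat \<Rightarrow> (nat \<times> nat) set \<Rightarrow> nat" where
  "rook_set_dist m n s X = Min ((rook_dist m n s) ` X)"

text \<open>{2}-resolving set: distance vectors distinguish all distinct nonempty
  vertex sets of size at most 2. Comparing the vectors D_S(X), D_S(Y) is
  comparing the functions s \<mapsto> d(s,X) on S.\<close>
definition two_resolving :: "nat \<Rightarrow> nat \<Rightarrow> (nat \<times> nat) set \<Rightarrow> bool" where
  "two_resolving m n S \<longleftrightarrow> S \<subseteq> rook_vertices m n \<and>
     (\<forall>X Y. X \<subseteq> rook_vertices m n \<longrightarrow> Y \<subseteq> rook_vertices m n \<longrightarrow>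
        X \<noteq> {} \<longrightarrow> Y \<noteq> {} \<longrightarrow> card X \<le> 2 \<longrightarrow> card Y \<le> 2 \<longrightarrow> X \<noteq> Y \<longrightarrow>
        (\<exists>s\<in>S. rook_set_dist m n s X \<noteq> rook_set_dist m n s Y))"

definition quadruple :: "nat \<Rightarrow> nat \<Rightarrow> (nat \<times> nat) set \<Rightarrow> bool" where
  "quadruple m n Q \<longleftrightarrow> (\<exists>a b u v. a < m \<and> b < m \<and> u < n \<and> v < n \<and> a \<noteq> b \<and> u \<noteq> v \<and>
      Q = {(a,v),(a,u),(b,v),(b,u)})"

end

theory Submission
  imports Defs
begin

lemma walk1: assumes "rook_walk m n p" "length p = Suc 0" shows "hd p = last p"
  using assms by (cases p) auto

lemma walk2: assumes "rook_walk m n p" "length p = Suc (Suc 0)" shows "rook_adj (hd p) (last p)"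
proof -
  obtain a b where "p = [a,b]" using assms(2)
    by (metis (no_types, opaque_lifting) length_0_conv length_Suc_conv)
  with assms(1) show ?thesis unfolding rook_walk_def by (auto dest: spec[of _ 0])
qed

lemma rdist:
  assumes "x \<in> rook_vertices m n" "y \<in> rook_vertices m n"
  shows "rook_dist m n x y = (if x = y then 0 else if fst x = fst y \<or> snd x = snd y then 1 else 2)"
proof -
  let ?P = "\<lambda>k. \<exists>p. rook_walk m n p \<and> hd p = x \<and> last p = y \<and> length p = Suc k"
  show ?thesis
  proof (cases "x = y")
    case True
    have "?P 0" using assms True by (intro exI[of _ "[x]"]) (auto simp: rook_walk_def)
    then show ?thesis unfolding rook_dist_def using True by (intro Least_equality) auto
  next
    case ne: False
    have n0: "\<not> ?P 0" using ne walk1 by blast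
    show ?thesis
    proof (cases "fst x = fst y \<or> snd x = snd y")
      case True
      have "?P 1" using assms True ne
        by (intro exI[of _ "[x,y]"]) (auto simp: rook_walk_def rook_adj_def less_Suc_eq)
      then show ?thesis unfolding rook_dist_def using True ne n0
        by (simp, intro Least_equality) (auto simp: not_less_eq_eq[symmetric] le_Suc_eq)
    next
      case False
      have n1: "\<not> ?P 1" using walk2 False by (fastforce simp: rook_adj_def)
      have "(fst x, snd y) \<in> rook_vertices m n" using assms by (auto simp: rook_vertices_def)
      then have "?P 2" using assms False
        by (intro exI[of _ "[x,(fst x, snd y),y]"])
           (auto simp: rook_walk_def rook_adj_def less_Suc_eq prod_eq_iff)
      then show ?thesis unfolding rook_dist_def using False ne n0 n1
      proof (simp, intro Least_equality)
        fix k assume "?P k"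
        with n0 n1 show "2 \<le> k" by (cases k; cases "k - 1") (auto simp: numeral_2_eq_2)
      qed auto
    qed
  qed
qed

theorem mainTheorem10:
  fixes m n :: nat and S :: "(nat \<times> nat) set"
  assumes "m \<ge> 2" and "n \<ge> 2"
    and "two_resolving m n S"
    and "quadruple m n Q"
  shows "Q \<inter> S \<noteq> {}"
proof
  assume dis: "Q \<inter> S = {}"
  obtain a b u v where q: "a < m" "b < m" "u < n" "v < n" "a \<noteq> b" "u \<noteq> v"
    and Q: "Q = {(a,v),(a,u),(b,v),(b,u)}" using assms(4) unfolding quadruple_def by blast
  let ?X = "{(a,v),(b,u)}" and ?Y = "{(a,u),(b,v)}"
  have V: "?X \<subseteq> rook_vertices m n" "?Y \<subseteq> rook_vertices m n"
    using q by (auto simp: rook_vertices_def)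
  have ne: "?X \<noteq> ?Y" using q by auto
  have c: "card ?X \<le> 2" "card ?Y \<le> 2" by (auto simp: card_insert_if)
  obtain s where s: "s \<in> S" and d: "rook_set_dist m n s ?X \<noteq> rook_set_dist m n s ?Y"
    using assms(3) V ne c unfolding two_resolving_def by blast
  have sV: "s \<in> rook_vertices m n" using s assms(3) unfolding two_resolving_def by blast
  have sQ: "s \<notin> Q" using s dis by blast
  obtain c w where sc: "s = (c,w)" by (cases s)
  have "rook_set_dist m n s ?X = rook_set_dist m n s ?Y"
    unfolding rook_set_dist_def using V sV
    apply (simp add: rdist)
    using sQ q unfolding Q sc by auto
  with d show False by blast
qed

end
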